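(* Consider $\min_{x\in\mathbb{R}^d} F(x):=f(x)+r(x)$ with $f=\frac1n\sum_{i=1}^n f_i$, each $f_i$ differentiable with $\|\nabla f_i(x)\|\le G_i$ and $\|\nabla f_i(x)-\nabla f_i(y)\|\le L_i\|x-y\|$ for all $x,y$, $r:\mathbb{R}^d\to\mathbb{R}$ possibly non-convex and non-smooth with existing proximal mapping, and $F$ attaining its minimum $F(x^* )$. Let $\tilde L=\frac1n\sum_i L_i>0$. Fix a proper sampling with marginals $p_i$ and a vector $v\in\mathbb{R}^n$ with $\mathbf{P}-pp^\top\preceq \mathrm{Diag}(p_1v_1,\dots,p_nv_n)$, and let $Q=\sum_{i=1}^n\frac{v_iL_i^2}{p_in^2}$. Run ProxSARAH-AS with $\mathcal J$ outer loops, $m$ inner loops, initial point $\tilde x^1$ and stepsize $\eta=\frac{1}{4\tilde L+2mQ/\tilde L}$. Then $$\frac{1}{m\mathcal J}\sum_{j=1}^{\mathcal J}\sum_{t=1}^m E\big[\mathrm{dist}(0,\hat\partial F(x_{t+1}^{(j)}))^2\big]\le \frac{1}{m\mathcal J}\Big(24\tilde L+\frac{4mQ}{\tilde L}\Big)\Delta,$$ where $\Delta=F(\tilde x^1)-F(x^* )$.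
   Context: $\mathrm{prox}_{\eta r}(y)=\arg\min_x\{\frac{1}{2\eta}\|x-y\|^2+r(x)\}$ (assumed nonempty; any element is used). A sampling is a random subset $S\subseteq[n]$; $p_i=\mathrm{Prob}(i\in S)>0$ (proper), $\mathbf P_{ij}=\mathrm{Prob}(\{i,j\}\subseteq S)$, $p=(p_1,\dots,p_n)^\top$, and $\preceq$ is the positive semidefinite order. ProxSARAH-AS: for $j=1,\dots,\mathcal J$: set $x_0^{(j)}=\tilde x^{(j)}$, $\mathcal V_0^{(j)}=\frac1n\sum_{i=1}^n\nabla f_i(x_0^{(j)})$, $x_1^{(j)}=x_0^{(j)}$; for $t=1,\dots,m$: draw $S_t^{(j)}$ from the sampling independently of all past randomness, set $\mathcal V_t^{(j)}=\sum_{i\in S_t^{(j)}}\frac{1}{np_i}(\nabla f_i(x_t^{(j)})-\nabla f_i(x_{t-1}^{(j)}))+\mathcal V_{t-1}^{(j)}$ and $x_{t+1}^{(j)}\in\mathrm{prox}_{\eta r}(x_t^{(j)}-\eta\mathcal V_t^{(j)})$; then $\tilde x^{(j+1)}=x_{m+1}^{(j)}$. The Fréchet subdifferential is $\hat\partial F(x)=\{v:\liminf_{\bar x\to x}\frac{F(\bar x)-F(x)-v^\top(\bar x-x)}{\|\bar x-x\|}\ge0\}$ and $\mathrm{dist}(0,A)=\inf_{v\in A}\|v\|$. *)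

theory Defs
  imports "HOL-Analysis.Analysis" "HOL-Probability.Probability"
begin

definition frechet_subdiff :: "('a::real_inner \<Rightarrow> real) \<Rightarrow> 'a \<Rightarrow> 'a set" where
  "frechet_subdiff F x = {v. Liminf (at x) (\<lambda>y. ereal ((F y - F x - inner v (y - x)) / norm (y - x))) \<ge> 0}"

(* dist(0,A) = inf_{v in A} ||v||, valued in [0,\<infinity>] (so dist(0,{}) = \<infinity>) *)
definition dist0 :: "'a::real_normed_vector set \<Rightarrow> ennreal" where
  "dist0 A = (INF v\<in>A. ennreal (norm v))"

definition prox_set :: "real \<Rightarrow> ('a::real_normed_vector \<Rightarrow> real) \<Rightarrow> 'a \<Rightarrow> 'a set" where
  "prox_set \<eta> r y = {x. \<forall>z. (1 / (2*\<eta>)) * (norm (x - y))^2 + r x \<le> (1 / (2*\<eta>)) * (norm (z - y))^2 + r z}"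

definition samp_p :: "nat set pmf \<Rightarrow> nat \<Rightarrow> real" where
  "samp_p Sd i = measure_pmf.prob Sd {S. i \<in> S}"

definition samp_P :: "nat set pmf \<Rightarrow> nat \<Rightarrow> nat \<Rightarrow> real" where
  "samp_P Sd i j = measure_pmf.prob Sd {S. {i, j} \<subseteq> S}"

definition psd_le :: "nat \<Rightarrow> (nat \<Rightarrow> nat \<Rightarrow> real) \<Rightarrow> (nat \<Rightarrow> nat \<Rightarrow> real) \<Rightarrow> bool" where
  "psd_le n A B \<longleftrightarrow> (\<forall>h::nat \<Rightarrow> real. (\<Sum>i<n. \<Sum>j<n. h i * (B i j - A i j) * h j) \<ge> 0)"

(* Inner loop of ProxSARAH-AS.  g i = gradient of f_i, px = prox selection,
   \<sigma> t = sampled set S_t (t \<ge> 1).  After t steps the state is (x_{t+1}, x_t, V_t). *)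
primrec sarah_inner ::
  "(nat \<Rightarrow> 'a::real_normed_vector \<Rightarrow> 'a) \<Rightarrow> nat \<Rightarrow> (nat \<Rightarrow> real) \<Rightarrow> real \<Rightarrow> ('a \<Rightarrow> 'a)
   \<Rightarrow> (nat \<Rightarrow> nat set) \<Rightarrow> 'a \<Rightarrow> nat \<Rightarrow> 'a \<times> 'a \<times> 'a" where
  "sarah_inner g n p \<eta> px \<sigma> x0 0 = (x0, x0, (1 / real n) *\<^sub>R (\<Sum>i<n. g i x0))"
| "sarah_inner g n p \<eta> px \<sigma> x0 (Suc t) =
     (case sarah_inner g n p \<eta> px \<sigma> x0 t of (xc, xp, V) \<Rightarrow>
        let V' = (\<Sum>i\<in>\<sigma> (Suc t). (1 / (real n * p i)) *\<^sub>R (g i xc - g i xp)) + V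
        in (px (xc - \<eta> *\<^sub>R V'), xc, V'))"

(* Outer loop: sarah_outer ... j = \<tilde>x^{(j+1)}; the sample S_t^{(j)} is \<omega> ((j-1)*m + (t-1)). *)
primrec sarah_outer ::
  "(nat \<Rightarrow> 'a::real_normed_vector \<Rightarrow> 'a) \<Rightarrow> nat \<Rightarrow> (nat \<Rightarrow> real) \<Rightarrow> real \<Rightarrow> ('a \<Rightarrow> 'a)
   \<Rightarrow> nat \<Rightarrow> (nat \<Rightarrow> nat set) \<Rightarrow> 'a \<Rightarrow> nat \<Rightarrow> 'a" where
  "sarah_outer g n p \<eta> px m \<omega> x1 0 = x1"
| "sarah_outer g n p \<eta> px m \<omega> x1 (Suc j) =
     fst (sarah_inner g n p \<eta> px (\<lambda>t. \<omega> (j * m + (t - 1))) (sarah_outer g n p \<eta> px m \<omega> x1 j) m)"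

(* x_{t+1}^{(j)} for j \<ge> 1, t \<ge> 1 *)
definition sarah_iter ::
  "(nat \<Rightarrow> 'a::real_normed_vector \<Rightarrow> 'a) \<Rightarrow> nat \<Rightarrow> (nat \<Rightarrow> real) \<Rightarrow> real \<Rightarrow> ('a \<Rightarrow> 'a)
   \<Rightarrow> nat \<Rightarrow> (nat \<Rightarrow> nat set) \<Rightarrow> 'a \<Rightarrow> nat \<Rightarrow> nat \<Rightarrow> 'a" where
  "sarah_iter g n p \<eta> px m \<omega> x1 j t =
     fst (sarah_inner g n p \<eta> px (\<lambda>s. \<omega> ((j - 1) * m + (s - 1)))
            (sarah_outer g n p \<eta> px m \<omega> x1 (j - 1)) t)"

end

theory Submission
  imports Defs
begin

lemma descent_two_sided:
  fixes \<phi> :: "'a::real_inner \<Rightarrow> real" and G :: "'a \<Rightarrow> 'a"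
  assumes der: "\<And>x. (\<phi> has_derivative (\<lambda>h. inner (G x) h)) (at x)"
    and lipG: "\<And>x y. norm (G x - G y) \<le> c * norm (x - y)"
  shows "\<bar>\<phi> y - \<phi> x - inner (G x) (y - x)\<bar> \<le> c / 2 * (norm (y - x))^2"
proof -
  define d where "d = y - x"
  define \<psi> where "\<psi> s = \<phi> (x + s *\<^sub>R d) - s * inner (G x) d" for s :: real
  have dpsi: "(\<psi> has_real_derivative inner (G (x + s *\<^sub>R d) - G x) d) (at s)" for s
  proof -
    have 1: "((\<lambda>s. x + s *\<^sub>R d) has_derivative (\<lambda>h. h *\<^sub>R d)) (at s)"
      by (auto intro!: derivative_eq_intros)
    have 2: "((\<lambda>s. \<phi> (x + s *\<^sub>R d)) has_derivative (\<lambda>h. inner (G (x + s *\<^sub>R d)) (h *\<^sub>R d))) (at s)"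
      using has_derivative_compose[OF 1 der] by simp
    have 3: "((\<lambda>s. \<phi> (x + s *\<^sub>R d)) has_real_derivative inner (G (x + s *\<^sub>R d)) d) (at s)"
      unfolding has_field_derivative_def using 2
      by (rule has_derivative_eq_rhs) (auto simp: fun_eq_iff inner_scaleR_right)
    show ?thesis unfolding \<psi>_def
      by (rule derivative_eq_intros 3 | simp add: inner_diff_left)+
  qed
  have bnd: "\<bar>inner (G (x + s *\<^sub>R d) - G x) d\<bar> \<le> c * s * (norm d)^2" if "s \<ge> 0" for s
  proof -
    have "\<bar>inner (G (x + s *\<^sub>R d) - G x) d\<bar> \<le> norm (G (x + s *\<^sub>R d) - G x) * norm d"
      by (rule Cauchy_Schwarz_ineq2)
    also have "\<dots> \<le> c * norm (s *\<^sub>R d) * norm d"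
      using lipG[of "x + s *\<^sub>R d" x] by (intro mult_right_mono) auto
    also have "\<dots> = c * s * (norm d)^2" using that by (simp add: power2_eq_square)
    finally show ?thesis .
  qed
  define \<chi>1 where "\<chi>1 s = \<psi> s - c * s^2 / 2 * (norm d)^2" for s
  define \<chi>2 where "\<chi>2 s = \<psi> s + c * s^2 / 2 * (norm d)^2" for s
  have d1: "(\<chi>1 has_real_derivative (inner (G (x + s *\<^sub>R d) - G x) d - c * s * (norm d)^2)) (at s)" for s
    unfolding \<chi>1_def by (rule derivative_eq_intros dpsi refl | simp)+
  have d2: "(\<chi>2 has_real_derivative (inner (G (x + s *\<^sub>R d) - G x) d + c * s * (norm d)^2)) (at s)" for s
    unfolding \<chi>2_def by (rule derivative_eq_intros dpsi refl | simp)+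
  obtain z1 where z1: "0 < z1" "z1 < 1" "\<chi>1 1 - \<chi>1 0 = (1 - 0) * (inner (G (x + z1 *\<^sub>R d) - G x) d - c * z1 * (norm d)^2)"
    using MVT2[of 0 1 \<chi>1 "\<lambda>s. inner (G (x + s *\<^sub>R d) - G x) d - c * s * (norm d)^2"] d1 by auto
  obtain z2 where z2: "0 < z2" "z2 < 1" "\<chi>2 1 - \<chi>2 0 = (1 - 0) * (inner (G (x + z2 *\<^sub>R d) - G x) d + c * z2 * (norm d)^2)"
    using MVT2[of 0 1 \<chi>2 "\<lambda>s. inner (G (x + s *\<^sub>R d) - G x) d + c * s * (norm d)^2"] d2 by auto
  have "\<chi>1 1 - \<chi>1 0 \<le> 0" using z1 bnd[of z1] by auto
  moreover have "\<chi>2 1 - \<chi>2 0 \<ge> 0" using z2 bnd[of z2] by auto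
  ultimately have "\<phi> y - \<phi> x - inner (G x) (y - x) \<le> c / 2 * (norm (y - x))^2"
      "-(c / 2 * (norm (y - x))^2) \<le> \<phi> y - \<phi> x - inner (G x) (y - x)"
    unfolding \<chi>1_def \<chi>2_def \<psi>_def d_def by simp_all
  then show ?thesis unfolding abs_le_iff by linarith
qed

lemma prox_ineq:
  assumes "x \<in> prox_set \<eta> r y"
  shows "(1 / (2*\<eta>)) * (norm (x - y))^2 + r x \<le> (1 / (2*\<eta>)) * (norm (z - y))^2 + r z"
  using assms unfolding prox_set_def by blast

lemma frechet_mem:
  fixes fb r :: "'a::real_inner \<Rightarrow> real"
  assumes eta: "\<eta> > 0" and c: "c \<ge> 0"
    and hf: "\<And>z. fb z - fb xp - inner gp (z - xp) \<ge> -(c/2) * (norm (z - xp))^2"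
    and hr: "\<And>z. (1 / (2*\<eta>)) * (norm (xp - y))^2 + r xp \<le> (1 / (2*\<eta>)) * (norm (z - y))^2 + r z"
  shows "gp - (1/\<eta>) *\<^sub>R (xp - y) \<in> frechet_subdiff (\<lambda>z. fb z + r z) xp"
proof -
  define w where "w = gp - (1/\<eta>) *\<^sub>R (xp - y)"
  define K where "K = c/2 + 1/(2*\<eta>)"
  have Kpos: "K > 0" unfolding K_def using eta c by (simp add: add_nonneg_pos)
  have key: "fb z + r z - (fb xp + r xp) - inner w (z - xp) \<ge> -K * (norm (z - xp))^2" for z
  proof -
    have e1: "(norm (z - y))^2 = (norm (z - xp))^2 + 2 * inner (z - xp) (xp - y) + (norm (xp - y))^2"
    proof -
      have g: "(norm (a + b))^2 = (norm a)^2 + 2 * inner a b + (norm b)^2" for a b :: 'a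
        by (simp add: power2_norm_eq_inner inner_add_left inner_add_right inner_commute)
      have "z - y = (z - xp) + (xp - y)" by simp
      then show ?thesis using g[of "z - xp" "xp - y"] by simp
    qed
    have "r z - r xp \<ge> (1 / (2*\<eta>)) * ((norm (xp - y))^2 - (norm (z - y))^2)"
      using hr[of z] by (simp add: algebra_simps)
    also have "(1 / (2*\<eta>)) * ((norm (xp - y))^2 - (norm (z - y))^2)
        = -(1/(2*\<eta>)) * (norm (z - xp))^2 - (1/\<eta>) * inner (z - xp) (xp - y)"
      unfolding e1 using eta by (simp add: field_simps)
    finally have hr': "r z - r xp \<ge> -(1/(2*\<eta>)) * (norm (z - xp))^2 - (1/\<eta>) * inner (z - xp) (xp - y)" .
    have "inner w (z - xp) = inner gp (z - xp) - (1/\<eta>) * inner (z - xp) (xp - y)"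
      unfolding w_def by (simp add: inner_diff_left inner_diff_right inner_commute algebra_simps)
    then show ?thesis using hr' hf[of z] unfolding K_def by (simp add: algebra_simps)
  qed
  have "0 \<le> Liminf (at xp) (\<lambda>z. ereal (((\<lambda>z. fb z + r z) z - (\<lambda>z. fb z + r z) xp - inner w (z - xp)) / norm (z - xp)))"
  proof (subst le_Liminf_iff, intro allI impI)
    fix yy :: ereal assume "yy < 0"
    show "\<forall>\<^sub>F z in at xp. yy < ereal ((fb z + r z - (fb xp + r xp) - inner w (z - xp)) / norm (z - xp))"
    proof (cases yy)
      case (real a)
      with \<open>yy < 0\<close> have a: "a < 0" by simp
      show ?thesis unfolding eventually_at
      proof (intro exI[of _ "-a/K"] conjI ballI impI)
        show "-a/K > 0" using a Kpos by (simp add: divide_neg_pos)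
        fix z assume z: "z \<in> UNIV" "z \<noteq> xp \<and> dist z xp < -a/K"
        have nz: "norm (z - xp) > 0" using z by simp
        have "K * norm (z - xp) < -a" using z Kpos by (simp add: dist_norm field_simps)
        have "-K * norm (z - xp) \<le> (fb z + r z - (fb xp + r xp) - inner w (z - xp)) / norm (z - xp)"
          using key[of z] nz by (simp add: field_simps power2_eq_square)
        then show "yy < ereal ((fb z + r z - (fb xp + r xp) - inner w (z - xp)) / norm (z - xp))"
          using real \<open>K * norm (z - xp) < -a\<close> by simp
      qed
    next
      case PInf with \<open>yy < 0\<close> show ?thesis by simp
    next
      case MInf then show ?thesis by simp
    qed
  qed
  then show ?thesis unfolding frechet_subdiff_def w_def by simp
qed

lemma dist0_sq_le:
  assumes "w \<in> A"
  shows "(dist0 A)^2 \<le> ennreal ((norm w)^2)"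
proof -
  have "dist0 A \<le> ennreal (norm w)" unfolding dist0_def using assms by (rule INF_lower)
  then have "(dist0 A)^2 \<le> (ennreal (norm w))^2" by (rule power_mono) simp
  then show ?thesis by (simp add: ennreal_power)
qed

lemma sampling_var:
  fixes b :: "nat \<Rightarrow> 'a::euclidean_space" and e :: 'a and Sd :: "nat set pmf"
  assumes sub: "set_pmf Sd \<subseteq> Pow {..<n}" and proper: "\<And>i. i < n \<Longrightarrow> samp_p Sd i > 0"
    and ESO: "psd_le n (\<lambda>i j. samp_P Sd i j - samp_p Sd i * samp_p Sd j)
                       (\<lambda>i j. if i = j then samp_p Sd i * v i else 0)"
  shows "measure_pmf.expectation Sd (\<lambda>S. (norm (e + ((\<Sum>i\<in>S. (1 / (real n * samp_p Sd i)) *\<^sub>R b i)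
            - (1 / real n) *\<^sub>R (\<Sum>i<n. b i))))^2)
     \<le> (norm e)^2 + (\<Sum>i<n. v i * (norm (b i))^2 / (samp_p Sd i * (real n)^2))"
proof -
  define p where "p = samp_p Sd"
  define \<beta> where "\<beta> i = (1 / real n) *\<^sub>R b i" for i
  define ind where "ind i S = (if i \<in> S then 1 else 0 :: real)" for i and S :: "nat set"
  define c where "c i S = ind i S / p i - 1" for i S
  have fin: "finite (set_pmf Sd)"
    using sub by (rule finite_subset) simp
  have int[simp]: "integrable (measure_pmf Sd) h" for h :: "nat set \<Rightarrow> real"
    by (rule integrable_measure_pmf_finite[OF fin])
  have Eind: "measure_pmf.expectation Sd (ind i) = p i" for i
  proof -
    have "ind i = indicator {S. i \<in> S}" by (auto simp: ind_def fun_eq_iff)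
    then show ?thesis by (simp add: p_def samp_p_def)
  qed
  have Eind2: "measure_pmf.expectation Sd (\<lambda>S. ind i S * ind j S) = samp_P Sd i j" for i j
  proof -
    have "(\<lambda>S. ind i S * ind j S) = indicator {S. {i, j} \<subseteq> S}" by (auto simp: ind_def fun_eq_iff)
    then show ?thesis by (simp add: samp_P_def)
  qed
  have Ec: "measure_pmf.expectation Sd (c i) = 0" if "i < n" for i
  proof -
    have "measure_pmf.expectation Sd (c i) = measure_pmf.expectation Sd (ind i) / p i - 1"
      unfolding c_def by simp
    also have "\<dots> = 0" using proper[OF that] by (simp add: Eind p_def)
    finally show ?thesis .
  qed
  have Ecc: "measure_pmf.expectation Sd (\<lambda>S. c i S * c j S) = samp_P Sd i j / (p i * p j) - 1"
    if "i < n" "j < n" for i j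
  proof -
    have "(\<lambda>S. c i S * c j S) = (\<lambda>S. ind i S * ind j S / (p i * p j) - ind i S / p i - ind j S / p j + 1)"
      using proper[OF that(1)] proper[OF that(2)] by (auto simp: c_def fun_eq_iff field_simps p_def)
    then have "measure_pmf.expectation Sd (\<lambda>S. c i S * c j S)
       = measure_pmf.expectation Sd (\<lambda>S. ind i S * ind j S) / (p i * p j)
         - measure_pmf.expectation Sd (ind i) / p i - measure_pmf.expectation Sd (ind j) / p j + 1"
      by simp
    also have "\<dots> = samp_P Sd i j / (p i * p j) - 1"
      using proper[OF that(1)] proper[OF that(2)] by (simp add: Eind Eind2 p_def)
    finally show ?thesis .
  qed
  have repr: "(\<Sum>i\<in>S. (1 / (real n * samp_p Sd i)) *\<^sub>R b i) - (1 / real n) *\<^sub>R (\<Sum>i<n. b i)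
      = (\<Sum>i<n. c i S *\<^sub>R \<beta> i)" if "S \<subseteq> {..<n}" for S
  proof -
    have "(\<Sum>i\<in>S. (1 / (real n * samp_p Sd i)) *\<^sub>R b i) = (\<Sum>i\<in>{..<n} \<inter> S. (1 / (real n * samp_p Sd i)) *\<^sub>R b i)"
      using that by (simp add: Int_absorb1)
    also have "\<dots> = (\<Sum>i<n. (ind i S / p i) *\<^sub>R \<beta> i)"
      by (subst sum.inter_restrict) (auto intro!: sum.cong simp: ind_def p_def \<beta>_def)
    finally have calc: "(\<Sum>i\<in>S. (1 / (real n * samp_p Sd i)) *\<^sub>R b i) = (\<Sum>i<n. (ind i S / p i) *\<^sub>R \<beta> i)" .
    have "(\<Sum>i<n. c i S *\<^sub>R \<beta> i) = (\<Sum>i<n. (ind i S / p i) *\<^sub>R \<beta> i) - (\<Sum>i<n. \<beta> i)"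
      by (simp add: c_def scaleR_diff_left sum_subtractf)
    moreover have "(\<Sum>i<n. \<beta> i) = (1 / real n) *\<^sub>R (\<Sum>i<n. b i)" by (simp add: \<beta>_def scaleR_sum_right)
    ultimately show ?thesis using calc by simp
  qed
  have expand: "(norm (e + (\<Sum>i<n. c i S *\<^sub>R \<beta> i)))^2
     = (norm e)^2 + 2 * (\<Sum>i<n. c i S * inner e (\<beta> i)) + (\<Sum>i<n. \<Sum>j<n. c i S * c j S * inner (\<beta> i) (\<beta> j))" for S
    by (simp add: power2_norm_eq_inner inner_add_left inner_add_right inner_sum_left inner_sum_right
        inner_commute sum_distrib_left algebra_simps sum.distrib)
  have "measure_pmf.expectation Sd (\<lambda>S. (norm (e + ((\<Sum>i\<in>S. (1 / (real n * samp_p Sd i)) *\<^sub>R b i)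
            - (1 / real n) *\<^sub>R (\<Sum>i<n. b i))))^2)
      = measure_pmf.expectation Sd (\<lambda>S. (norm e)^2 + 2 * (\<Sum>i<n. c i S * inner e (\<beta> i)) + (\<Sum>i<n. \<Sum>j<n. c i S * c j S * inner (\<beta> i) (\<beta> j)))"
    using sub by (intro integral_cong_AE) (auto simp: AE_measure_pmf_iff repr expand)
  also have "\<dots> = (norm e)^2 + 2 * (\<Sum>i<n. measure_pmf.expectation Sd (c i) * inner e (\<beta> i))
        + (\<Sum>i<n. \<Sum>j<n. measure_pmf.expectation Sd (\<lambda>S. c i S * c j S) * inner (\<beta> i) (\<beta> j))"
    by (simp add: integral_sum)
  also have "\<dots> = (norm e)^2 + (\<Sum>i<n. \<Sum>j<n. (samp_P Sd i j / (p i * p j) - 1) * inner (\<beta> i) (\<beta> j))"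
    by (simp add: Ec Ecc)
  also have "(\<Sum>i<n. \<Sum>j<n. (samp_P Sd i j / (p i * p j) - 1) * inner (\<beta> i) (\<beta> j))
      = (\<Sum>u\<in>Basis. \<Sum>i<n. \<Sum>j<n. (inner (\<beta> i) u / p i) * (samp_P Sd i j - p i * p j) * (inner (\<beta> j) u / p j))"
  proof -
    have "(samp_P Sd i j / (p i * p j) - 1) * inner (\<beta> i) (\<beta> j)
        = (\<Sum>u\<in>Basis. (inner (\<beta> i) u / p i) * (samp_P Sd i j - p i * p j) * (inner (\<beta> j) u / p j))"
      if "i < n" "j < n" for i j
    proof -
      have pi: "p i > 0" "p j > 0" using proper that by (auto simp: p_def)
      have "(samp_P Sd i j / (p i * p j) - 1) * inner (\<beta> i) (\<beta> j)
          = (samp_P Sd i j - p i * p j) / (p i * p j) * (\<Sum>u\<in>Basis. inner (\<beta> i) u * inner (\<beta> j) u)"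
        using pi by (simp add: euclidean_inner[of "\<beta> i" "\<beta> j"] field_simps)
      also have "\<dots> = (\<Sum>u\<in>Basis. (inner (\<beta> i) u / p i) * (samp_P Sd i j - p i * p j) * (inner (\<beta> j) u / p j))"
        unfolding sum_distrib_left using pi by (intro sum.cong refl) (simp add: field_simps)
      finally show ?thesis .
    qed
    then have "(\<Sum>i<n. \<Sum>j<n. (samp_P Sd i j / (p i * p j) - 1) * inner (\<beta> i) (\<beta> j))
       = (\<Sum>i<n. \<Sum>j<n. \<Sum>u\<in>Basis. (inner (\<beta> i) u / p i) * (samp_P Sd i j - p i * p j) * (inner (\<beta> j) u / p j))"
      by (auto intro!: sum.cong)
    also have "\<dots> = (\<Sum>i<n. \<Sum>u\<in>Basis. \<Sum>j<n. (inner (\<beta> i) u / p i) * (samp_P Sd i j - p i * p j) * (inner (\<beta> j) u / p j))"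
      by (rule sum.cong[OF refl], rule sum.swap)
    also have "\<dots> = (\<Sum>u\<in>Basis. \<Sum>i<n. \<Sum>j<n. (inner (\<beta> i) u / p i) * (samp_P Sd i j - p i * p j) * (inner (\<beta> j) u / p j))"
      by (rule sum.swap)
    finally show ?thesis .
  qed
  also have "\<dots> \<le> (\<Sum>u\<in>Basis. \<Sum>i<n. p i * v i * (inner (\<beta> i) u / p i)^2)"
  proof (rule sum_mono)
    fix u :: 'a
    define h where "h i = inner (\<beta> i) u / p i" for i
    have psd: "0 \<le> (\<Sum>i<n. \<Sum>j<n. h i * ((if i = j then p i * v i else 0) - (samp_P Sd i j - p i * p j)) * h j)"
      using ESO unfolding psd_le_def p_def by blast
    have "(\<Sum>i<n. \<Sum>j<n. h i * ((if i = j then p i * v i else 0) - (samp_P Sd i j - p i * p j)) * h j)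
        = (\<Sum>i<n. \<Sum>j<n. h i * (if i = j then p i * v i else 0) * h j) - (\<Sum>i<n. \<Sum>j<n. h i * (samp_P Sd i j - p i * p j) * h j)"
      by (simp add: right_diff_distrib left_diff_distrib sum_subtractf)
    also have "(\<Sum>i<n. \<Sum>j<n. h i * (if i = j then p i * v i else 0) * h j) = (\<Sum>i<n. p i * v i * (h i)^2)"
    proof (rule sum.cong[OF refl])
      fix i assume i: "i \<in> {..<n}"
      have "(\<Sum>j<n. h i * (if i = j then p i * v i else 0) * h j) = (\<Sum>j<n. if i = j then h i * (p i * v i) * h j else 0)"
        by (intro sum.cong) auto
      also have "\<dots> = p i * v i * (h i)^2" using i by (simp add: sum.delta power2_eq_square)
      finally show "(\<Sum>j<n. h i * (if i = j then p i * v i else 0) * h j) = p i * v i * (h i)^2" .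
    qed
    finally show "(\<Sum>i<n. \<Sum>j<n. (inner (\<beta> i) u / p i) * (samp_P Sd i j - p i * p j) * (inner (\<beta> j) u / p j))
        \<le> (\<Sum>i<n. p i * v i * (inner (\<beta> i) u / p i)^2)"
      using psd unfolding h_def by linarith
  qed
  also have "\<dots> = (\<Sum>i<n. v i * (norm (b i))^2 / (samp_p Sd i * (real n)^2))"
  proof -
    have "(\<Sum>u\<in>Basis. \<Sum>i<n. p i * v i * (inner (\<beta> i) u / p i)^2) = (\<Sum>i<n. \<Sum>u\<in>Basis. p i * v i * (inner (\<beta> i) u / p i)^2)"
      by (rule sum.swap)
    also have "\<dots> = (\<Sum>i<n. v i * (norm (b i))^2 / (samp_p Sd i * (real n)^2))"
    proof (rule sum.cong[OF refl])
      fix i assume "i \<in> {..<n}"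
      then have pi: "p i > 0" using proper by (auto simp: p_def)
      have "(\<Sum>u\<in>Basis. p i * v i * (inner (\<beta> i) u / p i)^2) = v i / p i * (\<Sum>u\<in>Basis. inner (\<beta> i) u * inner (\<beta> i) u)"
        using pi by (simp add: sum_distrib_left power2_eq_square field_simps)
      also have "\<dots> = v i / p i * (norm (\<beta> i))^2"
        by (simp add: power2_norm_eq_inner euclidean_inner[of "\<beta> i" "\<beta> i", symmetric])
      also have "\<dots> = v i * (norm (b i))^2 / (samp_p Sd i * (real n)^2)"
        by (simp add: \<beta>_def p_def power_divide power_mult_distrib field_simps)
      finally show "(\<Sum>u\<in>Basis. p i * v i * (inner (\<beta> i) u / p i)^2) = v i * (norm (b i))^2 / (samp_p Sd i * (real n)^2)" .
    qed
    finally show ?thesis .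
  qed
  finally show ?thesis by simp
qed

lemma nn_swap_pmf:
  "(\<integral>\<^sup>+y. \<integral>\<^sup>+f. h f y \<partial>measure_pmf P \<partial>measure_pmf D) = (\<integral>\<^sup>+f. \<integral>\<^sup>+y. h f y \<partial>measure_pmf D \<partial>measure_pmf P)"
proof -
  have "(\<integral>\<^sup>+y. \<integral>\<^sup>+f. h f y \<partial>measure_pmf P \<partial>measure_pmf D) = (\<integral>\<^sup>+x. h (snd x) (fst x) \<partial>measure_pmf (pair_pmf D P))"
    by (simp add: nn_integral_pair_pmf')
  also have "\<dots> = (\<integral>\<^sup>+x. h (fst x) (snd x) \<partial>measure_pmf (pair_pmf P D))"
    by (subst pair_commute_pmf) (simp add: case_prod_beta)
  also have "\<dots> = (\<integral>\<^sup>+f. \<integral>\<^sup>+y. h f y \<partial>measure_pmf D \<partial>measure_pmf P)"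
    by (simp add: nn_integral_pair_pmf')
  finally show ?thesis .
qed

lemma Pi_pmf_indep_step:
  fixes \<phi> :: "(nat \<Rightarrow> 'b) \<Rightarrow> 'b \<Rightarrow> ennreal"
  assumes fin: "finite A" and k: "k \<in> A" and indep: "\<And>\<omega> y S. \<phi> (fun_upd \<omega> k y) S = \<phi> \<omega> S"
  shows "(\<integral>\<^sup>+\<omega>. \<phi> \<omega> (\<omega> k) \<partial>measure_pmf (Pi_pmf A dflt (\<lambda>_. D)))
       = (\<integral>\<^sup>+\<omega>. (\<integral>\<^sup>+S. \<phi> \<omega> S \<partial>measure_pmf D) \<partial>measure_pmf (Pi_pmf A dflt (\<lambda>_. D)))"
proof -
  define B where "B = A - {k}"
  have indep': "\<And>\<omega> y. \<phi> (fun_upd \<omega> k y) = \<phi> \<omega>" using indep by (simp add: fun_eq_iff)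
  have AB: "A = insert k B" "k \<notin> B" "finite B" using k fin by (auto simp: B_def)
  have PI: "Pi_pmf A dflt (\<lambda>_. D) = map_pmf (\<lambda>(y,f). f(k:=y)) (pair_pmf D (Pi_pmf B dflt (\<lambda>_. D)))"
    unfolding AB(1) by (rule Pi_pmf_insert[OF AB(3) AB(2), of dflt "\<lambda>_. D", simplified])
  have "(\<integral>\<^sup>+\<omega>. \<phi> \<omega> (\<omega> k) \<partial>measure_pmf (Pi_pmf A dflt (\<lambda>_. D)))
      = (\<integral>\<^sup>+y. \<integral>\<^sup>+f. \<phi> f y \<partial>measure_pmf (Pi_pmf B dflt (\<lambda>_. D)) \<partial>measure_pmf D)"
    unfolding PI by (simp add: nn_integral_pair_pmf' indep)
  also have "\<dots> = (\<integral>\<^sup>+f. \<integral>\<^sup>+y. \<phi> f y \<partial>measure_pmf D \<partial>measure_pmf (Pi_pmf B dflt (\<lambda>_. D)))"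
    by (rule nn_swap_pmf)
  also have "\<dots> = (\<integral>\<^sup>+y. \<integral>\<^sup>+f. (\<integral>\<^sup>+S. \<phi> f S \<partial>measure_pmf D) \<partial>measure_pmf (Pi_pmf B dflt (\<lambda>_. D)) \<partial>measure_pmf D)"
    by (simp add: measure_pmf.emeasure_space_1)
  also have "\<dots> = (\<integral>\<^sup>+\<omega>. (\<integral>\<^sup>+S. \<phi> \<omega> S \<partial>measure_pmf D) \<partial>measure_pmf (Pi_pmf A dflt (\<lambda>_. D)))"
    unfolding PI by (simp add: nn_integral_pair_pmf' indep')
  finally show ?thesis .
qed

lemma final_alg:
  fixes Lt q K a D \<delta> W :: real
  assumes Lt: "Lt > 0" and q: "q \<ge> 0" and K: "K = 4 * Lt + 2 * q / Lt"
    and a: "a \<ge> 0" and D: "D \<ge> 0" and aq: "a \<le> q * D"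
    and hd: "\<delta> \<ge> - a / (2 * Lt) + (K / 2 - Lt) * D"
    and hW: "W \<le> (1 + Lt / K) * (a + 2 * K * \<delta> + Lt * K * D) + (1 + K / Lt) * Lt^2 * D"
  shows "W \<le> (24 * Lt + 4 * q / Lt) * \<delta>"
proof -
  have K4: "K \<ge> 4 * Lt" using K Lt q by simp
  have Kpos: "K > 0" using K4 Lt by simp
  have qK: "q = Lt * (K - 4 * Lt) / 2" using K Lt by (simp add: field_simps)
  have "a / (2 * Lt) \<le> q * D / (2 * Lt)" using aq Lt by (simp add: divide_right_mono)
  also have "q * D / (2 * Lt) = (K - 4 * Lt) * D / 4" using Lt unfolding qK by (simp add: field_simps)
  finally have e1: "a / (2 * Lt) \<le> (K - 4 * Lt) * D / 4" .
  have "\<delta> \<ge> -((K - 4 * Lt) * D / 4) + (K / 2 - Lt) * D" using hd e1 by linarith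
  moreover have "-((K - 4 * Lt) * D / 4) + (K / 2 - Lt) * D = K * D / 4" by (simp add: field_simps)
  ultimately have "\<delta> \<ge> K * D / 4" by linarith
  then have KD: "K * D \<le> 4 * \<delta>" by simp
  have k: "Lt / K \<le> 1/4" using K4 Kpos by (simp add: field_simps)
  have k0: "Lt / K \<ge> 0" using Lt Kpos by simp
  have t1: "(1 + Lt / K) * a \<le> 5/2 * Lt * \<delta>"
  proof -
    have "(1 + Lt / K) * a \<le> (5/4) * a" using k a by (intro mult_right_mono) auto
    also have "\<dots> \<le> (5/4) * (q * D)" using aq by simp
    also have "(5/4) * (q * D) \<le> (5/4) * (Lt * K / 2 * D)"
    proof -
      have "q \<le> Lt * K / 2" unfolding qK using Lt by (simp add: field_simps)
      then have "q * D \<le> Lt * K / 2 * D" using D by (rule mult_right_mono)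
      then show ?thesis by linarith
    qed
    also have "\<dots> = (5/8) * Lt * (K * D)" by simp
    also have "\<dots> \<le> (5/8) * Lt * (4 * \<delta>)" using KD Lt by (intro mult_left_mono) auto
    finally show ?thesis by simp
  qed
  have t2: "(1 + Lt / K) * (2 * K * \<delta>) = 2 * K * \<delta> + 2 * Lt * \<delta>"
    using Kpos by (simp add: field_simps)
  have t3: "(1 + Lt / K) * (Lt * K * D) \<le> 5 * Lt * \<delta>"
  proof -
    have "(1 + Lt / K) * (Lt * K * D) \<le> (5/4) * (Lt * K * D)"
      using k Lt Kpos D by (intro mult_right_mono) auto
    also have "\<dots> = (5/4) * Lt * (K * D)" by simp
    also have "\<dots> \<le> (5/4) * Lt * (4 * \<delta>)" using KD Lt by (intro mult_left_mono) auto
    finally show ?thesis by simp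
  qed
  have t4: "(1 + K / Lt) * Lt^2 * D \<le> 5 * Lt * \<delta>"
  proof -
    have "(1 + K / Lt) * Lt^2 * D = Lt * (Lt * D) + Lt * (K * D)" using Lt by (simp add: field_simps power2_eq_square)
    also have "Lt * D \<le> K * D / 4" using mult_right_mono[OF K4 D] by simp
    then have "Lt * (Lt * D) \<le> Lt * (K * D / 4)" using Lt by (intro mult_left_mono) auto
    then have "Lt * (Lt * D) + Lt * (K * D) \<le> Lt * (5/4 * (K * D))" by (simp add: algebra_simps)
    also have "\<dots> \<le> Lt * (5/4 * (4 * \<delta>))" using KD Lt by (intro mult_left_mono) auto
    finally show ?thesis by simp
  qed
  have "W \<le> (1 + Lt / K) * a + (1 + Lt / K) * (2 * K * \<delta>) + (1 + Lt / K) * (Lt * K * D) + (1 + K / Lt) * Lt^2 * D"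
    using hW by (simp add: distrib_left)
  also have "\<dots> \<le> 2 * K * \<delta> + 14.5 * Lt * \<delta>" using t1 t2 t3 t4 by linarith
  also have "\<dots> \<le> (2 * K + 16 * Lt) * \<delta>" using KD Kpos D Lt
    by (simp add: algebra_simps) (smt (verit) mult_nonneg_nonneg)
  also have "2 * K + 16 * Lt = 24 * Lt + 4 * q / Lt" using K by simp
  finally show ?thesis .
qed

lemma young_norm:
  fixes u a :: "'a::real_inner" and k :: real
  assumes k: "k > 0"
  shows "(norm (u - a))^2 \<le> (1 + k) * (norm a)^2 + (1 + 1/k) * (norm u)^2"
proof -
  have "(norm (u - a))^2 = (norm u)^2 - 2 * inner u a + (norm a)^2"
    by (simp add: power2_norm_eq_inner inner_diff_left inner_diff_right inner_commute)
  also have "- inner u a \<le> norm u * norm a"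
    using Cauchy_Schwarz_ineq2[of u a] by linarith
  then have "(norm u)^2 - 2 * inner u a + (norm a)^2 \<le> (norm u)^2 + 2 * (norm u * norm a) + (norm a)^2" by linarith
  also have "2 * (norm u * norm a) \<le> k * (norm a)^2 + (norm u)^2 / k"
  proof -
    have "0 \<le> (k * norm a - norm u)^2" by simp
    then have "2 * k * (norm u * norm a) \<le> k^2 * (norm a)^2 + (norm u)^2"
      by (simp add: power2_eq_square algebra_simps)
    then have "2 * k * (norm u * norm a) / k \<le> (k^2 * (norm a)^2 + (norm u)^2) / k"
      using k by (intro divide_right_mono) auto
    then show ?thesis using k by (simp add: field_simps power2_eq_square)
  qed
  then have "(norm u)^2 + 2 * (norm u * norm a) + (norm a)^2 \<le> (norm u)^2 + (k * (norm a)^2 + (norm u)^2 / k) + (norm a)^2"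
    by linarith
  also have "\<dots> = (1 + k) * (norm a)^2 + (1 + 1/k) * (norm u)^2" by (simp add: algebra_simps)
  finally show ?thesis .
qed

lemma path_alg:
  fixes e dd u :: "'a::real_inner" and K Lt Fx Fxp :: real
  assumes K: "K > 0" and Lt: "Lt > 0"
    and P1: "Fxp \<le> Fx - inner dd e - (K/2 - Lt/2) * (norm dd)^2"
    and hu: "norm u \<le> Lt * norm dd"
  shows "(norm (u - (e + K *\<^sub>R dd)))^2 \<le> (1 + Lt/K) * ((norm e)^2 + 2*K*(Fx - Fxp) + Lt*K*(norm dd)^2)
            + (1 + K/Lt) * Lt^2 * (norm dd)^2"
    and "Fx - Fxp \<ge> - ((norm e)^2 / (2*Lt)) + (K/2 - Lt) * (norm dd)^2"
proof -
  have y: "(norm (u - (e + K *\<^sub>R dd)))^2 \<le> (1 + Lt/K) * (norm (e + K *\<^sub>R dd))^2 + (1 + 1/(Lt/K)) * (norm u)^2"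
    using K Lt by (intro young_norm) simp
  have a: "(norm (e + K *\<^sub>R dd))^2 = (norm e)^2 + 2*K*inner dd e + K^2 * (norm dd)^2"
    unfolding power2_norm_eq_inner by (simp add: inner_add_left inner_add_right inner_commute power2_eq_square algebra_simps)
  have "2*K*inner dd e \<le> 2*K*(Fx - Fxp - (K/2 - Lt/2) * (norm dd)^2)"
    using P1 K by (intro mult_left_mono) auto
  then have a2: "(norm (e + K *\<^sub>R dd))^2 \<le> (norm e)^2 + 2*K*(Fx - Fxp) + Lt*K*(norm dd)^2"
    unfolding a by (simp add: algebra_simps power2_eq_square)
  have u2: "(norm u)^2 \<le> Lt^2 * (norm dd)^2"
    using hu by (metis norm_ge_zero power_mono power_mult_distrib)
  have "(1 + Lt/K) * (norm (e + K *\<^sub>R dd))^2 \<le> (1 + Lt/K) * ((norm e)^2 + 2*K*(Fx - Fxp) + Lt*K*(norm dd)^2)"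
    using a2 K Lt by (intro mult_left_mono) auto
  moreover have "(1 + 1/(Lt/K)) * (norm u)^2 \<le> (1 + K/Lt) * (Lt^2 * (norm dd)^2)"
  proof -
    have "1 / (Lt / K) = K / Lt" by simp
    moreover have "(1 + K/Lt) * (norm u)^2 \<le> (1 + K/Lt) * (Lt^2 * (norm dd)^2)"
      using u2 K Lt by (intro mult_left_mono) auto
    ultimately show ?thesis by simp
  qed
  ultimately show "(norm (u - (e + K *\<^sub>R dd)))^2 \<le> (1 + Lt/K) * ((norm e)^2 + 2*K*(Fx - Fxp) + Lt*K*(norm dd)^2)
            + (1 + K/Lt) * Lt^2 * (norm dd)^2" using y by (simp add: mult.assoc)
  have "- inner dd e \<le> norm dd * norm e" using Cauchy_Schwarz_ineq2[of dd e] by linarith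
  also have "norm dd * norm e \<le> Lt/2 * (norm dd)^2 + (norm e)^2 / (2*Lt)"
  proof -
    have "0 \<le> (Lt * norm dd - norm e)^2" by simp
    then have "2 * Lt * (norm dd * norm e) \<le> Lt^2 * (norm dd)^2 + (norm e)^2"
      by (simp add: power2_eq_square algebra_simps)
    then have "2 * Lt * (norm dd * norm e) / (2*Lt) \<le> (Lt^2 * (norm dd)^2 + (norm e)^2) / (2*Lt)"
      using Lt by (intro divide_right_mono) auto
    then show ?thesis using Lt by (simp add: field_simps power2_eq_square)
  qed
  finally show "Fx - Fxp \<ge> - ((norm e)^2 / (2*Lt)) + (K/2 - Lt) * (norm dd)^2"
    using P1 by (simp add: algebra_simps)
qed

lemma inner_dep:
  assumes "\<And>s. 1 \<le> s \<Longrightarrow> s \<le> t \<Longrightarrow> \<sigma> s = \<sigma>' s"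
  shows "sarah_inner g n p \<eta> px \<sigma> x0 t = sarah_inner g n p \<eta> px \<sigma>' x0 t"
  using assms
proof (induction t)
  case 0 then show ?case by simp
next
  case (Suc t)
  have "sarah_inner g n p \<eta> px \<sigma> x0 t = sarah_inner g n p \<eta> px \<sigma>' x0 t"
    using Suc.prems by (intro Suc.IH) auto
  moreover have "\<sigma> (Suc t) = \<sigma>' (Suc t)" using Suc.prems by simp
  ultimately show ?case by simp
qed

lemma outer_dep:
  assumes "\<And>i. i < j * m \<Longrightarrow> \<omega> i = \<omega>' i"
  shows "sarah_outer g n p \<eta> px m \<omega> x1 j = sarah_outer g n p \<eta> px m \<omega>' x1 j"
  using assms
proof (induction j)
  case 0 then show ?case by simp
next
  case (Suc j)
  have IH: "sarah_outer g n p \<eta> px m \<omega> x1 j = sarah_outer g n p \<eta> px m \<omega>' x1 j"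
    using Suc.prems by (intro Suc.IH) auto
  have "sarah_inner g n p \<eta> px (\<lambda>t. \<omega> (j * m + (t - 1))) (sarah_outer g n p \<eta> px m \<omega>' x1 j) m
      = sarah_inner g n p \<eta> px (\<lambda>t. \<omega>' (j * m + (t - 1))) (sarah_outer g n p \<eta> px m \<omega>' x1 j) m"
    using Suc.prems by (intro inner_dep) auto
  then show ?case by (simp add: IH)
qed

locale sarah_setup =
  fixes n m J :: nat
    and f :: "nat \<Rightarrow> 'a::euclidean_space \<Rightarrow> real"
    and g :: "nat \<Rightarrow> 'a \<Rightarrow> 'a"
    and L v :: "nat \<Rightarrow> real"
    and r :: "'a \<Rightarrow> real"
    and px :: "'a \<Rightarrow> 'a"
    and Sd :: "nat set pmf"
    and x1 :: 'a
    and F :: "'a \<Rightarrow> real"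
    and Lt Q \<eta> :: real
  assumes grad: "\<And>i x. i < n \<Longrightarrow> (f i has_derivative (\<lambda>h. inner (g i x) h)) (at x)"
    and lip: "\<And>i x y. i < n \<Longrightarrow> norm (g i x - g i y) \<le> L i * norm (x - y)"
    and F_def: "F = (\<lambda>x. (1 / real n) * (\<Sum>i<n. f i x) + r x)"
    and Lt_def: "Lt = (1 / real n) * (\<Sum>i<n. L i)"
    and Lt_pos: "Lt > 0"
    and samp_sub: "set_pmf Sd \<subseteq> Pow {..<n}"
    and proper: "\<And>i. i < n \<Longrightarrow> samp_p Sd i > 0"
    and ESO: "psd_le n (\<lambda>i j. samp_P Sd i j - samp_p Sd i * samp_p Sd j)
                       (\<lambda>i j. if i = j then samp_p Sd i * v i else 0)"
    and Q_def: "Q = (\<Sum>i<n. v i * (L i)^2 / (samp_p Sd i * (real n)^2))"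
    and eta_def: "\<eta> = 1 / (4 * Lt + 2 * real m * Q / Lt)"
    and prox: "\<And>y. px y \<in> prox_set \<eta> r y"
begin

definition "K = 4 * Lt + 2 * real m * Q / Lt"
definition "gf x = (1 / real n) *\<^sub>R (\<Sum>i<n. g i x)"
definition "fb x = (1 / real n) * (\<Sum>i<n. f i x)"
definition "outer \<omega> j = sarah_outer g n (samp_p Sd) \<eta> px m \<omega> x1 j"
definition "st j t \<omega> = sarah_inner g n (samp_p Sd) \<eta> px (\<lambda>s. \<omega> ((j - 1) * m + (s - 1))) (outer \<omega> (j - 1)) t"
definition "X j t \<omega> = fst (st j t \<omega>)"
definition "Y j t \<omega> = fst (snd (st j t \<omega>))"
definition "V j t \<omega> = snd (snd (st j t \<omega>))"
definition "e j t \<omega> = V j t \<omega> - gf (Y j t \<omega>)"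
definition "d j t \<omega> = X j t \<omega> - Y j t \<omega>"
definition "w j t \<omega> = gf (X j t \<omega>) - V j t \<omega> - K *\<^sub>R d j t \<omega>"

lemma n_pos: "n > 0"
  using Lt_pos unfolding Lt_def by (cases n) auto

lemma v_nonneg: "i < n \<Longrightarrow> v i \<ge> 0"
proof -
  assume i: "i < n"
  define h where "h a = (if a = i then 1 else 0 :: real)" for a
  have "0 \<le> (\<Sum>a<n. \<Sum>b<n. h a * ((if a = b then samp_p Sd a * v a else 0) - (samp_P Sd a b - samp_p Sd a * samp_p Sd b)) * h b)"
    using ESO unfolding psd_le_def by blast
  also have "\<dots> = samp_p Sd i * v i - (samp_P Sd i i - samp_p Sd i * samp_p Sd i)"
  proof -
    define Z where "Z a b = (if a = b then samp_p Sd a * v a else 0) - (samp_P Sd a b - samp_p Sd a * samp_p Sd b)" for a b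
    have "(\<Sum>a<n. \<Sum>b<n. h a * Z a b * h b) = (\<Sum>a<n. if a = i then Z i i else 0)"
    proof (intro sum.cong refl)
      fix a assume "a \<in> {..<n}"
      show "(\<Sum>b<n. h a * Z a b * h b) = (if a = i then Z i i else 0)"
      proof (cases "a = i")
        case True
        have "(\<Sum>b<n. h a * Z a b * h b) = (\<Sum>b<n. if b = i then Z i i else 0)"
          using True by (intro sum.cong refl) (simp add: h_def)
        also have "\<dots> = Z i i" using i by simp
        finally show ?thesis using True by simp
      qed (simp add: h_def)
    qed
    also have "\<dots> = Z i i" using i by simp
    finally show ?thesis unfolding Z_def by simp
  qed
  also have "samp_P Sd i i = samp_p Sd i" by (simp add: samp_P_def samp_p_def)
  finally have 1: "samp_p Sd i * (1 - samp_p Sd i) \<le> samp_p Sd i * v i" by (simp add: algebra_simps)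
  have "samp_p Sd i \<le> 1" unfolding samp_p_def by simp
  then have "0 \<le> samp_p Sd i * v i" using 1 proper[OF i] by (smt (verit) mult_nonneg_nonneg)
  then show "v i \<ge> 0" using proper[OF i] by (simp add: zero_le_mult_iff)
qed

lemma Q_nonneg: "Q \<ge> 0"
  unfolding Q_def using v_nonneg proper by (intro sum_nonneg) (auto intro!: divide_nonneg_pos mult_pos_pos)

lemma K_pos: "K > 0" and eta_K: "\<eta> = 1 / K"
proof -
  show "K > 0" unfolding K_def using Lt_pos Q_nonneg by (simp add: add_pos_nonneg)
  show "\<eta> = 1 / K" unfolding K_def eta_def ..
qed

lemma eta_pos: "\<eta> > 0" using K_pos eta_K by simp

lemma st_0: "st j 0 \<omega> = (outer \<omega> (j - 1), outer \<omega> (j - 1), gf (outer \<omega> (j - 1)))"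
  by (simp add: st_def gf_def)

lemma st_Suc: "st j (Suc t) \<omega> =
   (let V' = (\<Sum>i\<in>\<omega> ((j - 1) * m + t). (1 / (real n * samp_p Sd i)) *\<^sub>R (g i (X j t \<omega>) - g i (Y j t \<omega>))) + V j t \<omega>
    in (px (X j t \<omega> - \<eta> *\<^sub>R V'), X j t \<omega>, V'))"
  by (simp add: st_def X_def Y_def V_def split: prod.split)

lemma Y_Suc: "Y j (Suc t) \<omega> = X j t \<omega>"
  by (simp add: Y_def st_Suc Let_def)

lemma V_Suc: "V j (Suc t) \<omega> = (\<Sum>i\<in>\<omega> ((j - 1) * m + t). (1 / (real n * samp_p Sd i)) *\<^sub>R (g i (X j t \<omega>) - g i (Y j t \<omega>))) + V j t \<omega>"
  by (simp add: V_def st_Suc Let_def)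

lemma X_Suc: "X j (Suc t) \<omega> = px (Y j (Suc t) \<omega> - \<eta> *\<^sub>R V j (Suc t) \<omega>)"
  unfolding Y_Suc V_Suc by (simp only: X_def[of j "Suc t" \<omega>] st_Suc Let_def fst_conv)

lemma X_0: "X j 0 \<omega> = outer \<omega> (j - 1)" and Y_0: "Y j 0 \<omega> = outer \<omega> (j - 1)"
  and e_0: "e j 0 \<omega> = 0" and d_0: "d j 0 \<omega> = 0"
  by (simp_all add: X_def Y_def e_def d_def V_def st_0)

lemma outer_X: "j \<ge> 1 \<Longrightarrow> outer \<omega> j = X j m \<omega>"
  by (cases j) (simp_all add: outer_def X_def st_def)

lemma st_dep:
  assumes "\<And>i. i < (j - 1) * m + t \<Longrightarrow> \<omega> i = \<omega>' i"
  shows "st j t \<omega> = st j t \<omega>'"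
proof -
  have "outer \<omega> (j - 1) = outer \<omega>' (j - 1)"
    unfolding outer_def using assms by (intro outer_dep) auto
  moreover have "sarah_inner g n (samp_p Sd) \<eta> px (\<lambda>s. \<omega> ((j - 1) * m + (s - 1))) x0 t
      = sarah_inner g n (samp_p Sd) \<eta> px (\<lambda>s. \<omega>' ((j - 1) * m + (s - 1))) x0 t" for x0
    using assms by (intro inner_dep) auto
  ultimately show ?thesis unfolding st_def by simp
qed

lemma st_upd: "st j t (fun_upd \<omega> ((j - 1) * m + t) y) = st j t \<omega>"
  by (rule st_dep) simp

lemma e_Suc: "e j (Suc t) \<omega> = e j t \<omega> + ((\<Sum>i\<in>\<omega> ((j - 1) * m + t). (1 / (real n * samp_p Sd i)) *\<^sub>R (g i (X j t \<omega>) - g i (Y j t \<omega>)))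
     - (1 / real n) *\<^sub>R (\<Sum>i<n. g i (X j t \<omega>) - g i (Y j t \<omega>)))"
  by (simp add: e_def V_Suc Y_Suc gf_def sum_subtractf scaleR_diff_right algebra_simps)

end

context sarah_setup
begin

lemma F_eq: "F = (\<lambda>z. fb z + r z)"
  unfolding F_def fb_def ..

lemma fb_smooth: "\<bar>fb y - fb x - inner (gf x) (y - x)\<bar> \<le> Lt / 2 * (norm (y - x))^2"
proof -
  have each: "\<bar>f i y - f i x - inner (g i x) (y - x)\<bar> \<le> L i / 2 * (norm (y - x))^2" if "i < n" for i
    using that by (intro descent_two_sided[where \<phi> = "f i" and G = "g i"]) (auto intro: grad lip)
  have "fb y - fb x - inner (gf x) (y - x) = (1 / real n) * (\<Sum>i<n. f i y - f i x - inner (g i x) (y - x))"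
  proof -
    have "inner (gf x) (y - x) = (1 / real n) * (\<Sum>i<n. inner (g i x) (y - x))"
      by (simp add: gf_def inner_sum_left)
    then show ?thesis by (simp add: fb_def sum_subtractf right_diff_distrib)
  qed
  then have "\<bar>fb y - fb x - inner (gf x) (y - x)\<bar> = (1 / real n) * \<bar>\<Sum>i<n. f i y - f i x - inner (g i x) (y - x)\<bar>"
    by (simp add: abs_mult)
  also have "\<dots> \<le> (1 / real n) * (\<Sum>i<n. L i / 2 * (norm (y - x))^2)"
    by (intro mult_left_mono order.trans[OF sum_abs] sum_mono each) auto
  also have "\<dots> = Lt / 2 * (norm (y - x))^2"
    by (simp add: Lt_def sum_distrib_right[symmetric] sum_divide_distrib[symmetric])
  finally show ?thesis .
qed

lemma gf_lip: "norm (gf x - gf y) \<le> Lt * norm (x - y)"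
proof -
  have "gf x - gf y = (1 / real n) *\<^sub>R (\<Sum>i<n. g i x - g i y)"
    by (simp add: gf_def sum_subtractf scaleR_diff_right)
  then have "norm (gf x - gf y) = (1 / real n) * norm (\<Sum>i<n. g i x - g i y)" by simp
  also have "\<dots> \<le> (1 / real n) * (\<Sum>i<n. L i * norm (x - y))"
    by (intro mult_left_mono order.trans[OF norm_sum] sum_mono lip) auto
  also have "\<dots> = Lt * norm (x - y)" by (simp add: Lt_def sum_distrib_right)
  finally show ?thesis .
qed

lemma step_P1:
  assumes xp: "xp = px (x - \<eta> *\<^sub>R Vv)"
  shows "F xp \<le> F x - inner (xp - x) (Vv - gf x) - (K/2 - Lt/2) * (norm (xp - x))^2"
proof -
  define dd where "dd = xp - x"
  have pr: "(1 / (2*\<eta>)) * (norm (xp - (x - \<eta> *\<^sub>R Vv)))^2 + r xp \<le> (1 / (2*\<eta>)) * (norm (x - (x - \<eta> *\<^sub>R Vv)))^2 + r x"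
    using prox_ineq[OF prox[of "x - \<eta> *\<^sub>R Vv"], of x] xp by simp
  have g: "(norm (a + b))^2 = (norm a)^2 + 2 * inner a b + (norm b)^2" for a b :: 'a
    by (simp add: power2_norm_eq_inner inner_add_left inner_add_right inner_commute)
  have eqn: "xp - (x - \<eta> *\<^sub>R Vv) = dd + \<eta> *\<^sub>R Vv" by (simp add: dd_def)
  have n1: "(norm (xp - (x - \<eta> *\<^sub>R Vv)))^2 = (norm dd)^2 + 2 * \<eta> * inner dd Vv + \<eta>^2 * (norm Vv)^2"
    unfolding eqn g[of dd "\<eta> *\<^sub>R Vv"] by (simp add: power_mult_distrib)
  have n2: "(norm (x - (x - \<eta> *\<^sub>R Vv)))^2 = \<eta>^2 * (norm Vv)^2"
    by (simp add: power_mult_distrib)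
  have sp: "(1/(2*\<eta>)) * ((norm dd)^2 + 2*\<eta>*inner dd Vv + \<eta>^2*(norm Vv)^2)
      = (1/(2*\<eta>)) * (norm dd)^2 + inner dd Vv + (1/(2*\<eta>)) * (\<eta>^2*(norm Vv)^2)"
    using eta_pos by (simp add: field_simps)
  have K2: "1/(2*\<eta>) = K/2" using K_pos unfolding eta_K by simp
  have rr: "r xp \<le> r x - K/2 * (norm dd)^2 - inner dd Vv"
    using pr[unfolded n1 n2, unfolded sp, unfolded K2] by simp
  have ff: "fb xp \<le> fb x + inner (gf x) dd + Lt/2 * (norm dd)^2"
    using fb_smooth[of xp x] unfolding dd_def abs_le_iff by linarith
  show ?thesis unfolding F_eq using rr ff unfolding dd_def[symmetric]
    by (simp add: inner_diff_right inner_commute algebra_simps)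
qed

lemma step_P2:
  assumes xp: "xp = px (x - \<eta> *\<^sub>R Vv)"
  shows "gf xp - Vv - K *\<^sub>R (xp - x) \<in> frechet_subdiff F xp"
proof -
  have hf: "fb z - fb xp - inner (gf xp) (z - xp) \<ge> -(Lt/2) * (norm (z - xp))^2" for z
    using fb_smooth[of z xp] unfolding abs_le_iff by linarith
  have hr: "(1 / (2*\<eta>)) * (norm (xp - (x - \<eta> *\<^sub>R Vv)))^2 + r xp \<le> (1 / (2*\<eta>)) * (norm (z - (x - \<eta> *\<^sub>R Vv)))^2 + r z" for z
    using prox_ineq[OF prox[of "x - \<eta> *\<^sub>R Vv"], of z] xp by simp
  have mem: "gf xp - (1/\<eta>) *\<^sub>R (xp - (x - \<eta> *\<^sub>R Vv)) \<in> frechet_subdiff (\<lambda>z. fb z + r z) xp"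
    using eta_pos Lt_pos hf hr by (intro frechet_mem[where c = Lt]) auto
  have eq1: "(1/\<eta>) *\<^sub>R (xp - (x - \<eta> *\<^sub>R Vv)) = Vv + K *\<^sub>R (xp - x)"
    using eta_pos unfolding eta_K by (simp add: algebra_simps)
  show ?thesis using mem[unfolded eq1] unfolding F_eq by (simp only: diff_diff_eq)
qed

lemma path_bounds:
  assumes t: "t \<ge> 1"
  shows "(dist0 (frechet_subdiff F (X j t \<omega>)))^2 \<le> ennreal ((norm (w j t \<omega>))^2)"
    and "(norm (w j t \<omega>))^2 \<le> (1 + Lt/K) * ((norm (e j t \<omega>))^2 + 2*K*(F (Y j t \<omega>) - F (X j t \<omega>)) + Lt*K*(norm (d j t \<omega>))^2)
            + (1 + K/Lt) * Lt^2 * (norm (d j t \<omega>))^2"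
    and "F (Y j t \<omega>) - F (X j t \<omega>) \<ge> - ((norm (e j t \<omega>))^2 / (2*Lt)) + (K/2 - Lt) * (norm (d j t \<omega>))^2"
proof -
  obtain t' where t': "t = Suc t'" using t by (cases t) auto
  have xp: "X j t \<omega> = px (Y j t \<omega> - \<eta> *\<^sub>R V j t \<omega>)" unfolding t' by (rule X_Suc)
  show "(dist0 (frechet_subdiff F (X j t \<omega>)))^2 \<le> ennreal ((norm (w j t \<omega>))^2)"
    using step_P2[OF xp] unfolding w_def d_def by (rule dist0_sq_le)
  have P1: "F (X j t \<omega>) \<le> F (Y j t \<omega>) - inner (d j t \<omega>) (e j t \<omega>) - (K/2 - Lt/2) * (norm (d j t \<omega>))^2"
    using step_P1[OF xp] unfolding d_def e_def .
  have hu: "norm (gf (X j t \<omega>) - gf (Y j t \<omega>)) \<le> Lt * norm (d j t \<omega>)"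
    unfolding d_def by (rule gf_lip)
  have weq: "w j t \<omega> = (gf (X j t \<omega>) - gf (Y j t \<omega>)) - (e j t \<omega> + K *\<^sub>R d j t \<omega>)"
    by (simp add: w_def e_def)
  show "(norm (w j t \<omega>))^2 \<le> (1 + Lt/K) * ((norm (e j t \<omega>))^2 + 2*K*(F (Y j t \<omega>) - F (X j t \<omega>)) + Lt*K*(norm (d j t \<omega>))^2)
            + (1 + K/Lt) * Lt^2 * (norm (d j t \<omega>))^2"
    unfolding weq by (rule path_alg(1)[OF K_pos Lt_pos P1 hu])
  show "F (Y j t \<omega>) - F (X j t \<omega>) \<ge> - ((norm (e j t \<omega>))^2 / (2*Lt)) + (K/2 - Lt) * (norm (d j t \<omega>))^2"
    by (rule path_alg(2)[OF K_pos Lt_pos P1 hu])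
qed

end

context sarah_setup
begin

definition "Mp = Pi_pmf {..<J*m} {} (\<lambda>_. Sd)"

lemma fin_Sd: "finite (set_pmf Sd)"
  using samp_sub by (rule finite_subset) simp

lemma fin_Mp: "finite (set_pmf Mp)"
  unfolding Mp_def using fin_Sd by (subst set_Pi_pmf) (auto intro!: finite_PiE_dflt)

lemma int_Mp[simp]: "integrable (measure_pmf Mp) (h :: _ \<Rightarrow> real)"
  by (rule integrable_measure_pmf_finite[OF fin_Mp])

lemma int_Sd[simp]: "integrable (measure_pmf Sd) (h :: _ \<Rightarrow> real)"
  by (rule integrable_measure_pmf_finite[OF fin_Sd])

lemma nn_Mp: "(\<And>\<omega>. 0 \<le> h \<omega>) \<Longrightarrow> (\<integral>\<^sup>+\<omega>. ennreal (h \<omega>) \<partial>measure_pmf Mp) = ennreal (measure_pmf.expectation Mp h)"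
  by (intro nn_integral_eq_integral) auto

lemma nn_Sd: "(\<And>\<omega>. 0 \<le> h \<omega>) \<Longrightarrow> (\<integral>\<^sup>+\<omega>. ennreal (h \<omega>) \<partial>measure_pmf Sd) = ennreal (measure_pmf.expectation Sd h)"
  by (intro nn_integral_eq_integral) auto

lemma bQ: "(\<Sum>i<n. v i * (norm (g i xa - g i xb))^2 / (samp_p Sd i * (real n)^2)) \<le> Q * (norm (xa - xb))^2"
proof -
  have "(\<Sum>i<n. v i * (norm (g i xa - g i xb))^2 / (samp_p Sd i * (real n)^2))
      \<le> (\<Sum>i<n. v i * (L i)^2 / (samp_p Sd i * (real n)^2) * (norm (xa - xb))^2)"
  proof (rule sum_mono)
    fix i assume i: "i \<in> {..<n}"
    have "norm (g i xa - g i xb) \<le> L i * norm (xa - xb)" using lip i by simp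
    then have "(norm (g i xa - g i xb))^2 \<le> (L i * norm (xa - xb))^2" by (rule power_mono) simp
    then have "v i * (norm (g i xa - g i xb))^2 \<le> v i * ((L i)^2 * (norm (xa - xb))^2)"
      using v_nonneg i by (intro mult_left_mono) (auto simp: power_mult_distrib)
    then have "v i * (norm (g i xa - g i xb))^2 / (samp_p Sd i * (real n)^2) \<le> v i * ((L i)^2 * (norm (xa - xb))^2) / (samp_p Sd i * (real n)^2)"
      using proper[of i] i by (intro divide_right_mono) (auto intro!: mult_nonneg_nonneg)
    then show "v i * (norm (g i xa - g i xb))^2 / (samp_p Sd i * (real n)^2) \<le> v i * (L i)^2 / (samp_p Sd i * (real n)^2) * (norm (xa - xb))^2"
      by simp
  qed
  also have "\<dots> = Q * (norm (xa - xb))^2" unfolding Q_def by (simp add: sum_distrib_right)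
  finally show ?thesis .
qed

lemma var_step:
  assumes j: "1 \<le> j" "j \<le> J" and t: "t < m"
  shows "measure_pmf.expectation Mp (\<lambda>\<omega>. (norm (e j (Suc t) \<omega>))^2)
     \<le> measure_pmf.expectation Mp (\<lambda>\<omega>. (norm (e j t \<omega>))^2) + Q * measure_pmf.expectation Mp (\<lambda>\<omega>. (norm (d j t \<omega>))^2)"
proof -
  define k where "k = (j - 1) * m + t"
  have "(j - 1) * m + m = j * m" using j by (cases j) auto
  also have "\<dots> \<le> J * m" using j by simp
  finally have k: "k \<in> {..<J*m}" using t unfolding k_def by simp
  define b where "b \<omega> i = g i (X j t \<omega>) - g i (Y j t \<omega>)" for \<omega> i
  define Zf where "Zf \<omega> S = (\<Sum>i\<in>S. (1 / (real n * samp_p Sd i)) *\<^sub>R b \<omega> i) - (1 / real n) *\<^sub>R (\<Sum>i<n. b \<omega> i)" for \<omega> S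
  define \<phi> where "\<phi> \<omega> S = ennreal ((norm (e j t \<omega> + Zf \<omega> S))^2)" for \<omega> S
  have indep: "\<phi> (fun_upd \<omega> k y) S = \<phi> \<omega> S" for \<omega> y S
    unfolding \<phi>_def Zf_def b_def e_def X_def Y_def V_def k_def st_upd ..
  have "(\<integral>\<^sup>+\<omega>. ennreal ((norm (e j (Suc t) \<omega>))^2) \<partial>measure_pmf Mp) = (\<integral>\<^sup>+\<omega>. \<phi> \<omega> (\<omega> k) \<partial>measure_pmf Mp)"
    by (simp add: \<phi>_def Zf_def b_def e_Suc k_def)
  also have "\<dots> = (\<integral>\<^sup>+\<omega>. (\<integral>\<^sup>+S. \<phi> \<omega> S \<partial>measure_pmf Sd) \<partial>measure_pmf Mp)"
    unfolding Mp_def by (rule Pi_pmf_indep_step[OF _ k indep]) simp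
  also have "\<dots> \<le> (\<integral>\<^sup>+\<omega>. ennreal ((norm (e j t \<omega>))^2 + Q * (norm (d j t \<omega>))^2) \<partial>measure_pmf Mp)"
  proof (rule nn_integral_mono)
    fix \<omega>
    have "(\<integral>\<^sup>+S. \<phi> \<omega> S \<partial>measure_pmf Sd) = ennreal (measure_pmf.expectation Sd (\<lambda>S. (norm (e j t \<omega> + Zf \<omega> S))^2))"
      unfolding \<phi>_def by (rule nn_Sd) simp
    also have "measure_pmf.expectation Sd (\<lambda>S. (norm (e j t \<omega> + Zf \<omega> S))^2)
        \<le> (norm (e j t \<omega>))^2 + (\<Sum>i<n. v i * (norm (b \<omega> i))^2 / (samp_p Sd i * (real n)^2))"
      unfolding Zf_def by (rule sampling_var[OF samp_sub proper ESO])
    also have "\<dots> \<le> (norm (e j t \<omega>))^2 + Q * (norm (d j t \<omega>))^2"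
      using bQ[of "X j t \<omega>" "Y j t \<omega>"] unfolding b_def d_def by simp
    finally show "(\<integral>\<^sup>+S. \<phi> \<omega> S \<partial>measure_pmf Sd) \<le> ennreal ((norm (e j t \<omega>))^2 + Q * (norm (d j t \<omega>))^2)"
      by (simp add: ennreal_leI)
  qed
  also have "\<dots> = ennreal (measure_pmf.expectation Mp (\<lambda>\<omega>. (norm (e j t \<omega>))^2 + Q * (norm (d j t \<omega>))^2))"
    using Q_nonneg by (intro nn_Mp) auto
  also have "measure_pmf.expectation Mp (\<lambda>\<omega>. (norm (e j t \<omega>))^2 + Q * (norm (d j t \<omega>))^2)
      = measure_pmf.expectation Mp (\<lambda>\<omega>. (norm (e j t \<omega>))^2) + Q * measure_pmf.expectation Mp (\<lambda>\<omega>. (norm (d j t \<omega>))^2)"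
    by simp
  finally have "ennreal (measure_pmf.expectation Mp (\<lambda>\<omega>. (norm (e j (Suc t) \<omega>))^2))
      \<le> ennreal (measure_pmf.expectation Mp (\<lambda>\<omega>. (norm (e j t \<omega>))^2) + Q * measure_pmf.expectation Mp (\<lambda>\<omega>. (norm (d j t \<omega>))^2))"
    by (subst nn_Mp[symmetric]) auto
  moreover have "0 \<le> measure_pmf.expectation Mp (\<lambda>\<omega>. (norm (e j t \<omega>))^2) + Q * measure_pmf.expectation Mp (\<lambda>\<omega>. (norm (d j t \<omega>))^2)"
    using Q_nonneg by (intro add_nonneg_nonneg mult_nonneg_nonneg integral_nonneg_AE) auto
  ultimately show ?thesis by simp
qed

end

context sarah_setup
begin

abbreviation EE :: "((nat \<Rightarrow> nat set) \<Rightarrow> real) \<Rightarrow> real" where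
  "EE h \<equiv> measure_pmf.expectation Mp h"

lemma e_bound:
  assumes j: "1 \<le> j" "j \<le> J"
  shows "t \<le> m \<Longrightarrow> EE (\<lambda>\<omega>. (norm (e j t \<omega>))^2) \<le> Q * (\<Sum>s<t. EE (\<lambda>\<omega>. (norm (d j s \<omega>))^2))"
proof (induction t)
  case 0 then show ?case by (simp add: e_0)
next
  case (Suc t)
  have "EE (\<lambda>\<omega>. (norm (e j (Suc t) \<omega>))^2) \<le> EE (\<lambda>\<omega>. (norm (e j t \<omega>))^2) + Q * EE (\<lambda>\<omega>. (norm (d j t \<omega>))^2)"
    using Suc.prems j by (intro var_step) auto
  also have "\<dots> \<le> Q * (\<Sum>s<t. EE (\<lambda>\<omega>. (norm (d j s \<omega>))^2)) + Q * EE (\<lambda>\<omega>. (norm (d j t \<omega>))^2)"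
    using Suc by simp
  also have "\<dots> = Q * (\<Sum>s<Suc t. EE (\<lambda>\<omega>. (norm (d j s \<omega>))^2))" by (simp add: distrib_left)
  finally show ?case .
qed

lemma a_bound:
  assumes j: "1 \<le> j" "j \<le> J"
  shows "(\<Sum>t=1..m. EE (\<lambda>\<omega>. (norm (e j t \<omega>))^2)) \<le> real m * Q * (\<Sum>t=1..m. EE (\<lambda>\<omega>. (norm (d j t \<omega>))^2))"
proof -
  define D where "D = (\<Sum>t=1..m. EE (\<lambda>\<omega>. (norm (d j t \<omega>))^2))"
  have nn: "0 \<le> EE (\<lambda>\<omega>. (norm (d j s \<omega>))^2)" for s by (intro integral_nonneg_AE) auto
  have each: "EE (\<lambda>\<omega>. (norm (e j t \<omega>))^2) \<le> Q * D" if t: "t \<in> {1..m}" for t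
  proof -
    have "EE (\<lambda>\<omega>. (norm (e j t \<omega>))^2) \<le> Q * (\<Sum>s<t. EE (\<lambda>\<omega>. (norm (d j s \<omega>))^2))"
      using t j by (intro e_bound) auto
    also have "(\<Sum>s<t. EE (\<lambda>\<omega>. (norm (d j s \<omega>))^2)) \<le> (\<Sum>s\<in>{0..m}. EE (\<lambda>\<omega>. (norm (d j s \<omega>))^2))"
      using t nn by (intro sum_mono2) auto
    also have "\<dots> = EE (\<lambda>\<omega>. (norm (d j 0 \<omega>))^2) + D"
      unfolding D_def by (subst sum.atLeast_Suc_atMost) auto
    also have "\<dots> = D" by (simp add: d_0)
    finally show ?thesis using Q_nonneg by (simp add: mult_left_mono)
  qed
  have "(\<Sum>t=1..m. EE (\<lambda>\<omega>. (norm (e j t \<omega>))^2)) \<le> (\<Sum>t=1..m. Q * D)"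
    using each by (rule sum_mono)
  also have "\<dots> = real m * Q * D" by simp
  finally show ?thesis unfolding D_def .
qed

lemma telescope_path:
  assumes j: "1 \<le> j"
  shows "(\<Sum>t=1..m. F (Y j t \<omega>) - F (X j t \<omega>)) = F (outer \<omega> (j - 1)) - F (outer \<omega> j)"
proof -
  have "(\<Sum>t=1..m. F (Y j t \<omega>) - F (X j t \<omega>)) = - (\<Sum>t=1..m. F (Y j (Suc t) \<omega>) - F (Y j t \<omega>))"
    by (simp add: Y_Suc sum_negf[symmetric])
  also have "(\<Sum>t=1..m. F (Y j (Suc t) \<omega>) - F (Y j t \<omega>)) = F (Y j (Suc m) \<omega>) - F (Y j 1 \<omega>)"
    by (rule sum_Suc_diff) simp
  also have "Y j (Suc m) \<omega> = outer \<omega> j" using outer_X[OF j] by (simp add: Y_Suc)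
  also have "Y j 1 \<omega> = outer \<omega> (j - 1)" using Y_Suc[of j 0 \<omega>] by (simp add: X_0)
  finally show ?thesis by simp
qed

lemma per_j:
  assumes j: "1 \<le> j" "j \<le> J"
  shows "(\<Sum>t=1..m. EE (\<lambda>\<omega>. (norm (w j t \<omega>))^2))
     \<le> (24 * Lt + 4 * real m * Q / Lt) * (EE (\<lambda>\<omega>. F (outer \<omega> (j - 1))) - EE (\<lambda>\<omega>. F (outer \<omega> j)))"
proof -
  define a where "a = (\<Sum>t=1..m. EE (\<lambda>\<omega>. (norm (e j t \<omega>))^2))"
  define D where "D = (\<Sum>t=1..m. EE (\<lambda>\<omega>. (norm (d j t \<omega>))^2))"
  define \<delta> where "\<delta> = (\<Sum>t=1..m. EE (\<lambda>\<omega>. F (Y j t \<omega>) - F (X j t \<omega>)))"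
  define W where "W = (\<Sum>t=1..m. EE (\<lambda>\<omega>. (norm (w j t \<omega>))^2))"
  have a0: "a \<ge> 0" unfolding a_def by (intro sum_nonneg integral_nonneg_AE) auto
  have D0: "D \<ge> 0" unfolding D_def by (intro sum_nonneg integral_nonneg_AE) auto
  have aq: "a \<le> (real m * Q) * D" unfolding a_def D_def using a_bound[OF j] by simp
  have \<delta>eq: "\<delta> = EE (\<lambda>\<omega>. F (outer \<omega> (j - 1))) - EE (\<lambda>\<omega>. F (outer \<omega> j))"
  proof -
    have "\<delta> = EE (\<lambda>\<omega>. \<Sum>t=1..m. F (Y j t \<omega>) - F (X j t \<omega>))"
      unfolding \<delta>_def by (simp add: integral_sum)
    also have "\<dots> = EE (\<lambda>\<omega>. F (outer \<omega> (j - 1)) - F (outer \<omega> j))"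
      using telescope_path[OF j(1)] by simp
    also have "\<dots> = EE (\<lambda>\<omega>. F (outer \<omega> (j - 1))) - EE (\<lambda>\<omega>. F (outer \<omega> j))" by simp
    finally show ?thesis .
  qed
  have hW1: "EE (\<lambda>\<omega>. (norm (w j t \<omega>))^2) \<le> (1 + Lt/K) * (EE (\<lambda>\<omega>. (norm (e j t \<omega>))^2) + 2*K*EE (\<lambda>\<omega>. F (Y j t \<omega>) - F (X j t \<omega>))
        + Lt*K*EE (\<lambda>\<omega>. (norm (d j t \<omega>))^2)) + (1 + K/Lt) * Lt^2 * EE (\<lambda>\<omega>. (norm (d j t \<omega>))^2)"
    if t: "t \<in> {1..m}" for t
  proof -
    have "EE (\<lambda>\<omega>. (norm (w j t \<omega>))^2) \<le> EE (\<lambda>\<omega>. (1 + Lt/K) * ((norm (e j t \<omega>))^2 + 2*K*(F (Y j t \<omega>) - F (X j t \<omega>)) + Lt*K*(norm (d j t \<omega>))^2)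
            + (1 + K/Lt) * Lt^2 * (norm (d j t \<omega>))^2)"
      using t by (intro integral_mono path_bounds(2)) auto
    also have "\<dots> = (1 + Lt/K) * (EE (\<lambda>\<omega>. (norm (e j t \<omega>))^2) + 2*K*EE (\<lambda>\<omega>. F (Y j t \<omega>) - F (X j t \<omega>))
        + Lt*K*EE (\<lambda>\<omega>. (norm (d j t \<omega>))^2)) + (1 + K/Lt) * Lt^2 * EE (\<lambda>\<omega>. (norm (d j t \<omega>))^2)"
      by simp
    finally show ?thesis .
  qed
  have hW: "W \<le> (1 + Lt/K) * (a + 2*K*\<delta> + Lt*K*D) + (1 + K/Lt) * Lt^2 * D"
  proof -
    have "W \<le> (\<Sum>t=1..m. (1 + Lt/K) * (EE (\<lambda>\<omega>. (norm (e j t \<omega>))^2) + 2*K*EE (\<lambda>\<omega>. F (Y j t \<omega>) - F (X j t \<omega>))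
        + Lt*K*EE (\<lambda>\<omega>. (norm (d j t \<omega>))^2)) + (1 + K/Lt) * Lt^2 * EE (\<lambda>\<omega>. (norm (d j t \<omega>))^2))"
      unfolding W_def by (rule sum_mono[OF hW1])
    also have "\<dots> = (1 + Lt/K) * (a + 2*K*\<delta> + Lt*K*D) + (1 + K/Lt) * Lt^2 * D"
      unfolding a_def D_def \<delta>_def by (simp add: sum.distrib sum_distrib_left distrib_left right_diff_distrib sum_subtractf)
    finally show ?thesis .
  qed
  have hd: "\<delta> \<ge> - a / (2 * Lt) + (K / 2 - Lt) * D"
  proof -
    have "\<delta> \<ge> (\<Sum>t=1..m. EE (\<lambda>\<omega>. - ((norm (e j t \<omega>))^2 / (2*Lt)) + (K/2 - Lt) * (norm (d j t \<omega>))^2))"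
      unfolding \<delta>_def by (intro sum_mono integral_mono path_bounds(3)) auto
    also have "(\<Sum>t=1..m. EE (\<lambda>\<omega>. - ((norm (e j t \<omega>))^2 / (2*Lt)) + (K/2 - Lt) * (norm (d j t \<omega>))^2))
        = - a / (2 * Lt) + (K / 2 - Lt) * D"
      unfolding a_def D_def by (simp add: sum.distrib sum_distrib_left sum_divide_distrib sum_negf sum_subtractf)
    finally show ?thesis .
  qed
  have "W \<le> (24 * Lt + 4 * (real m * Q) / Lt) * \<delta>"
    by (rule final_alg[OF Lt_pos _ _ a0 D0 aq hd hW]) (use Q_nonneg K_def in auto)
  then show ?thesis unfolding W_def \<delta>eq by (simp add: mult.assoc)
qed

end

lemma telescope_real: "(\<Sum>j=1..(N::nat). (\<phi> (j - 1) - \<phi> j :: real)) = \<phi> 0 - \<phi> N"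
  by (induction N) simp_all

context sarah_setup
begin

lemma iter_X: "sarah_iter g n (samp_p Sd) \<eta> px m \<omega> x1 j t = X j t \<omega>"
  by (simp add: sarah_iter_def X_def st_def outer_def)

lemma main_locale:
  assumes xs: "\<And>x. F xs \<le> F x" and m1: "m \<ge> 1" and J1: "J \<ge> 1"
  shows "ennreal (1 / (real m * real J)) *
           (\<Sum>j\<in>{1..J}. \<Sum>t\<in>{1..m}.
              \<integral>\<^sup>+ \<omega>. (dist0 (frechet_subdiff F
                     (sarah_iter g n (samp_p Sd) \<eta> px m \<omega> x1 j t)))^2
                \<partial>(measure_pmf (Pi_pmf {..<J * m} {} (\<lambda>_. Sd))))
         \<le> ennreal ((1 / (real m * real J)) * (24 * Lt + 4 * real m * Q / Lt) * (F x1 - F xs))"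
proof -
  define C where "C = 24 * Lt + 4 * real m * Q / Lt"
  have C0: "C \<ge> 0" unfolding C_def using Lt_pos Q_nonneg by (auto intro!: add_nonneg_nonneg divide_nonneg_pos)
  define \<Phi> where "\<Phi> j = EE (\<lambda>\<omega>. F (outer \<omega> j))" for j
  have wn: "0 \<le> EE (\<lambda>\<omega>. (norm (w j t \<omega>))^2)" for j t by (intro integral_nonneg_AE) auto
  have step1: "(\<integral>\<^sup>+ \<omega>. (dist0 (frechet_subdiff F (sarah_iter g n (samp_p Sd) \<eta> px m \<omega> x1 j t)))^2
                \<partial>(measure_pmf (Pi_pmf {..<J * m} {} (\<lambda>_. Sd)))) \<le> ennreal (EE (\<lambda>\<omega>. (norm (w j t \<omega>))^2))"
    if t: "t \<in> {1..m}" for j t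
  proof -
    have "(\<integral>\<^sup>+ \<omega>. (dist0 (frechet_subdiff F (sarah_iter g n (samp_p Sd) \<eta> px m \<omega> x1 j t)))^2
                \<partial>(measure_pmf (Pi_pmf {..<J * m} {} (\<lambda>_. Sd)))) \<le> (\<integral>\<^sup>+ \<omega>. ennreal ((norm (w j t \<omega>))^2) \<partial>measure_pmf Mp)"
      unfolding Mp_def iter_X using t by (intro nn_integral_mono path_bounds(1)) auto
    also have "\<dots> = ennreal (EE (\<lambda>\<omega>. (norm (w j t \<omega>))^2))" by (rule nn_Mp) simp
    finally show ?thesis .
  qed
  have "(\<Sum>j\<in>{1..J}. \<Sum>t\<in>{1..m}.
              \<integral>\<^sup>+ \<omega>. (dist0 (frechet_subdiff F
                     (sarah_iter g n (samp_p Sd) \<eta> px m \<omega> x1 j t)))^2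
                \<partial>(measure_pmf (Pi_pmf {..<J * m} {} (\<lambda>_. Sd))))
     \<le> (\<Sum>j\<in>{1..J}. \<Sum>t\<in>{1..m}. ennreal (EE (\<lambda>\<omega>. (norm (w j t \<omega>))^2)))"
    by (intro sum_mono step1)
  also have "\<dots> = ennreal (\<Sum>j\<in>{1..J}. \<Sum>t\<in>{1..m}. EE (\<lambda>\<omega>. (norm (w j t \<omega>))^2))"
    using wn by (simp add: sum_nonneg)
  also have "(\<Sum>j\<in>{1..J}. \<Sum>t\<in>{1..m}. EE (\<lambda>\<omega>. (norm (w j t \<omega>))^2)) \<le> (\<Sum>j\<in>{1..J}. C * (\<Phi> (j - 1) - \<Phi> j))"
    unfolding C_def \<Phi>_def by (intro sum_mono per_j) auto
  also have "\<dots> = C * (\<Phi> 0 - \<Phi> J)" unfolding sum_distrib_left[symmetric] telescope_real[of \<Phi> J] ..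
  also have "\<dots> \<le> C * (F x1 - F xs)"
  proof -
    have "\<Phi> 0 = F x1" by (simp add: \<Phi>_def outer_def)
    moreover have "F xs \<le> \<Phi> J"
    proof -
      have "EE (\<lambda>\<omega>. F xs) \<le> \<Phi> J" unfolding \<Phi>_def by (intro integral_mono xs) auto
      then show ?thesis by simp
    qed
    ultimately show ?thesis using C0 by (intro mult_left_mono) auto
  qed
  finally have S: "(\<Sum>j\<in>{1..J}. \<Sum>t\<in>{1..m}.
              \<integral>\<^sup>+ \<omega>. (dist0 (frechet_subdiff F
                     (sarah_iter g n (samp_p Sd) \<eta> px m \<omega> x1 j t)))^2
                \<partial>(measure_pmf (Pi_pmf {..<J * m} {} (\<lambda>_. Sd)))) \<le> ennreal (C * (F x1 - F xs))"
    by (simp add: ennreal_leI)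
  have "ennreal (1 / (real m * real J)) * (\<Sum>j\<in>{1..J}. \<Sum>t\<in>{1..m}.
              \<integral>\<^sup>+ \<omega>. (dist0 (frechet_subdiff F
                     (sarah_iter g n (samp_p Sd) \<eta> px m \<omega> x1 j t)))^2
                \<partial>(measure_pmf (Pi_pmf {..<J * m} {} (\<lambda>_. Sd))))
      \<le> ennreal (1 / (real m * real J)) * ennreal (C * (F x1 - F xs))"
    using S by (rule mult_left_mono) simp
  also have "\<dots> = ennreal ((1 / (real m * real J)) * C * (F x1 - F xs))"
  proof -
    have nonneg: "0 \<le> C * (F x1 - F xs)" using C0 xs[of x1] by simp
    show ?thesis using ennreal_mult''[OF nonneg, of "1 / (real m * real J)"] by (simp only: mult.assoc)
  qed
  finally show ?thesis unfolding C_def .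
qed

end

theorem theorem5p4:
  fixes n m J :: nat
    and f :: "nat \<Rightarrow> 'a::euclidean_space \<Rightarrow> real"
    and g :: "nat \<Rightarrow> 'a \<Rightarrow> 'a"
    and G L v :: "nat \<Rightarrow> real"
    and r :: "'a \<Rightarrow> real"
    and px :: "'a \<Rightarrow> 'a"
    and Sd :: "nat set pmf"
    and x1 xstar :: 'a
    and F :: "'a \<Rightarrow> real"
    and Lt Q \<eta> :: real
  assumes grad: "\<And>i x. i < n \<Longrightarrow> (f i has_derivative (\<lambda>h. inner (g i x) h)) (at x)"
    and bdd: "\<And>i x. i < n \<Longrightarrow> norm (g i x) \<le> G i"
    and lip: "\<And>i x y. i < n \<Longrightarrow> norm (g i x - g i y) \<le> L i * norm (x - y)"
    and F_def: "F = (\<lambda>x. (1 / real n) * (\<Sum>i<n. f i x) + r x)"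
    and xstar: "\<And>x. F xstar \<le> F x"
    and Lt_def: "Lt = (1 / real n) * (\<Sum>i<n. L i)"
    and Lt_pos: "Lt > 0"
    and samp_sub: "set_pmf Sd \<subseteq> Pow {..<n}"
    and proper: "\<And>i. i < n \<Longrightarrow> samp_p Sd i > 0"
    and ESO: "psd_le n (\<lambda>i j. samp_P Sd i j - samp_p Sd i * samp_p Sd j)
                       (\<lambda>i j. if i = j then samp_p Sd i * v i else 0)"
    and Q_def: "Q = (\<Sum>i<n. v i * (L i)^2 / (samp_p Sd i * (real n)^2))"
    and eta_def: "\<eta> = 1 / (4 * Lt + 2 * real m * Q / Lt)"
    and prox: "\<And>y. px y \<in> prox_set \<eta> r y"
    and m_pos: "m \<ge> 1" and J_pos: "J \<ge> 1"
  shows "ennreal (1 / (real m * real J)) *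
           (\<Sum>j\<in>{1..J}. \<Sum>t\<in>{1..m}.
              \<integral>\<^sup>+ \<omega>. (dist0 (frechet_subdiff F
                     (sarah_iter g n (samp_p Sd) \<eta> px m \<omega> x1 j t)))^2
                \<partial>(measure_pmf (Pi_pmf {..<J * m} {} (\<lambda>_. Sd))))
         \<le> ennreal ((1 / (real m * real J)) * (24 * Lt + 4 * real m * Q / Lt) * (F x1 - F xstar))"
proof -
  interpret S: sarah_setup n m J f g L v r px Sd x1 F Lt Q \<eta>
    using grad lip F_def Lt_def Lt_pos samp_sub proper ESO Q_def eta_def prox
    by unfold_locales auto
  show ?thesis by (rule S.main_locale[OF xstar m_pos J_pos])
qed

end
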